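(* Assume that for all real $z\ge 1$ one has $\bigl|\sum_{n\le z}\mu(n)^2 - \tfrac{6}{\pi^2}z\bigr|\le 0.68\sqrt z$. Then for all real $z\geq 1$, \[ \Biggl|\sum_{n\leq z} \frac{\mu(n)^2}{n} - \frac{\log z}{\zeta(2)} - A\Biggr| \leq \frac{2.04}{\sqrt{z}}, \qquad\text{where } A=\frac{\gamma}{\zeta(2)}-2\frac{\zeta'(2)}{\zeta(2)^2}, \] $\gamma$ being the Euler–Mascheroni constant.
   Context: $\mu$ is the Möbius function and $\zeta$ the Riemann zeta function. *)

theory Defs
  imports "HOL-Analysis.Analysis" "HOL-Computational_Algebra.Squarefree"
begin

definition moebius_mu :: "nat \<Rightarrow> int" where
  "moebius_mu n = (if squarefree n then (-1) ^ card (prime_factors n) else 0)"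

text \<open>Riemann zeta function on the reals, via its Dirichlet series (meaningful for s > 1).\<close>
definition zeta :: "real \<Rightarrow> real" where
  "zeta s = (\<Sum>n. 1 / real (Suc n) powr s)"

end

theory Submission
  imports Defs
begin



definition aa :: "nat \<Rightarrow> real" where "aa n = real_of_int (moebius_mu n ^ 2)"

lemma aa_eq: "aa n = (if squarefree n then 1 else 0)"
  by (simp add: aa_def moebius_mu_def power_even_eq[of _ "2"] flip: power_mult)

lemma sqf_pos: "squarefree (m::nat) \<Longrightarrow> m > 0"
  by (metis gr0I not_squarefree_0)

lemma square_part_unique:
  fixes m d :: nat
  assumes "squarefree m" "d > 0"
  shows "square_part (m * d^2) = d"
proof -
  have m0: "m \<noteq> 0" using sqf_pos[OF assms(1)] by simp
  have "normalize (square_part (m * d^2)) = normalize d"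
  proof (rule multiplicity_eq_imp_eq)
    show "square_part (m * d^2) \<noteq> 0" using m0 assms by simp
    show "d \<noteq> 0" using assms by simp
    fix p :: nat assume p: "prime p"
    have "multiplicity p m \<le> 1" using assms(1) m0 p squarefree_factorial_semiring'' by blast
    moreover have "multiplicity p (m * d^2) = multiplicity p m + 2 * multiplicity p d"
      using p m0 assms(2) by (simp add: prime_elem_multiplicity_mult_distrib prime_elem_multiplicity_power_distrib)
    ultimately show "multiplicity p (square_part (m * d^2)) = multiplicity p d"
      using p by (simp add: prime_multiplicity_square_part)
  qed
  thus ?thesis by simp
qed

lemma squarefree_part_unique:
  fixes m d :: nat
  assumes "squarefree m" "d > 0"
  shows "squarefree_part (m * d^2) = m"
  using square_part_unique[OF assms] assms sqf_pos[OF assms(1)] by (simp add: squarefree_part_def)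

lemma harm_decomp:
  "harm N = (\<Sum>d\<in>{1..N}. (\<Sum>m\<in>{1..N div d^2}. aa m / real m) / real d^2)"
proof -
  define S where "S = Sigma {1..N} (\<lambda>d. {m\<in>{1..N div d^2}. squarefree m})"
  have "(\<Sum>d\<in>{1..N}. (\<Sum>m\<in>{1..N div d^2}. aa m / real m) / real d^2)
      = (\<Sum>d\<in>{1..N}. (\<Sum>m\<in>{m\<in>{1..N div d^2}. squarefree m}. 1 / real (m * d^2)))"
  proof (rule sum.cong[OF refl])
    fix d assume "d \<in> {1..N}"
    have "(\<Sum>m\<in>{1..N div d^2}. aa m / real m) = (\<Sum>m\<in>{1..N div d^2}. if squarefree m then 1 / real m else 0)"
      by (intro sum.cong) (auto simp: aa_eq)
    also have "\<dots> = (\<Sum>m\<in>{m\<in>{1..N div d^2}. squarefree m}. 1 / real m)"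
      by (rule sum.inter_filter[symmetric]) simp
    finally show "(\<Sum>m\<in>{1..N div d^2}. aa m / real m) / real d^2 = (\<Sum>m\<in>{m\<in>{1..N div d^2}. squarefree m}. 1 / real (m * d^2))"
      by (simp add: sum_divide_distrib)
  qed
  also have "\<dots> = (\<Sum>(d,m)\<in>S. 1 / real (m * d^2))"
    unfolding S_def by (subst sum.Sigma) auto
  also have "\<dots> = (\<Sum>n\<in>{1..N}. 1 / real n)"
  proof (rule sum.reindex_bij_witness[where i = "\<lambda>n. (square_part n, squarefree_part n)" and j = "\<lambda>(d,m). m * d^2"])
    fix a assume "a \<in> S"
    then obtain d m where a: "a = (d,m)" "d \<ge> 1" "d \<le> N" "m \<ge> 1" "m \<le> N div d^2" "squarefree m"
      unfolding S_def by auto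
    show "(square_part (case a of (d, m) \<Rightarrow> m * d\<^sup>2), squarefree_part (case a of (d, m) \<Rightarrow> m * d\<^sup>2)) = a"
      using a square_part_unique squarefree_part_unique by auto
    have "m * d^2 \<le> N" using a(5) by (meson le_trans mult_le_mono1 div_times_less_eq_dividend)
    moreover have "m * d^2 \<ge> 1" using a by simp
    ultimately show "(case a of (d, m) \<Rightarrow> m * d\<^sup>2) \<in> {1..N}" using a by simp
    show "1 / real (case a of (d, m) \<Rightarrow> m * d\<^sup>2) = (case a of (d, m) \<Rightarrow> 1 / real (m * d\<^sup>2))"
      using a by simp
  next
    fix b assume b: "b \<in> {1..N}"
    show "(case (square_part b, squarefree_part b) of (d, m) \<Rightarrow> m * d\<^sup>2) = b"
      using squarefree_decompose[of b] by simp
    have b0: "b \<noteq> 0" using b by simp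
    have sp: "square_part b > 0" using b0 square_part_0_iff[of b] by (simp del: square_part_0_iff)
    have "square_part b ^ 2 dvd b" by simp
    hence "square_part b ^ 2 \<le> b" using b0 by (simp add: dvd_imp_le)
    moreover have "square_part b \<le> square_part b ^ 2" using sp by (simp add: power2_eq_square)
    ultimately have "square_part b \<le> N" using b by simp
    moreover have "squarefree_part b \<le> N div square_part b ^ 2"
      using squarefree_decompose[of b] b sp
      by (metis div_le_mono nonzero_mult_div_cancel_right power_not_zero atLeastAtMost_iff less_not_refl3)
    moreover have "squarefree_part b \<ge> 1" using squarefree_part_nonzero[of b] by linarith
    ultimately show "(square_part b, squarefree_part b) \<in> S"
      unfolding S_def using sp by auto
  qed
  also have "\<dots> = harm N"
    by (simp add: harm_def divide_inverse)
  finally show ?thesis by simp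
qed




definition QQ :: "real \<Rightarrow> real" where "QQ x = (\<Sum>n\<in>{1..nat \<lfloor>x\<rfloor>}. aa n)"
definition SS :: "real \<Rightarrow> real" where "SS x = (\<Sum>n\<in>{1..nat \<lfloor>x\<rfloor>}. aa n / real n)"

lemma floor_in: "real n \<le> t \<Longrightarrow> t < real n + 1 \<Longrightarrow> nat \<lfloor>t\<rfloor> = n"
  by (metis floor_eq2 nat_int of_int_of_nat_eq)

lemma QQ_int: "QQ t = QQ (real n)" if "real n \<le> t" "t < real n + 1"
  using floor_in[OF that] by (simp add: QQ_def)

lemma SS_int: "SS t = SS (real n)" if "real n \<le> t" "t < real n + 1"
  using floor_in[OF that] by (simp add: SS_def)

lemma SQ_shape:
  assumes "n \<ge> 1" "real n \<le> t" "t \<le> real n + 1"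
  shows "SS t - QQ t / t = SS (real n) - QQ (real n) / t"
proof (cases "t < real n + 1")
  case True thus ?thesis using QQ_int[OF assms(2) True] SS_int[OF assms(2) True] by simp
next
  case False
  hence t: "t = real (Suc n)" using assms by simp
  have f: "nat \<lfloor>t\<rfloor> = Suc n" unfolding t by (simp only: floor_of_nat nat_int)
  have Q: "QQ t = QQ (real n) + aa (Suc n)" unfolding QQ_def f by simp
  have S: "SS t = SS (real n) + aa (Suc n) / t" unfolding SS_def f by (simp add: t)
  have "t > 0" using t by simp
  thus ?thesis unfolding Q S by (simp add: diff_divide_distrib add_divide_distrib)
qed



lemma deriv_f:
  fixes q c K t :: real
  assumes "t > 0"
  shows "((\<lambda>t. s - q / t - c * ln t + e * (2*K / sqrt t)) has_real_derivative ((q - c*t - e * K * sqrt t) / t^2)) (at t)"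
proof -
  have st: "sqrt t * sqrt t = t" using assms by simp
  have i1: "((\<lambda>t. inverse t) has_real_derivative - (inverse t * 1 * inverse t)) (at t)"
    using assms by (intro DERIV_inverse' DERIV_ident) auto
  have i2: "((\<lambda>t. inverse (sqrt t)) has_real_derivative - (inverse (sqrt t) * (inverse (sqrt t) / 2) * inverse (sqrt t))) (at t)"
    using assms by (intro DERIV_inverse' DERIV_real_sqrt) auto
  have "((\<lambda>t. s - q * inverse t - c * ln t + (e * 2*K) * inverse (sqrt t)) has_real_derivative
      (0 - q * (- (inverse t * 1 * inverse t)) - c * inverse t + (e*2*K) * (- (inverse (sqrt t) * (inverse (sqrt t) / 2) * inverse (sqrt t))))) (at t)"
    using assms
    by (intro DERIV_add DERIV_diff DERIV_cmult DERIV_const i1 i2 DERIV_ln) auto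
  moreover have "(0 - q * (- (inverse t * 1 * inverse t)) - c * inverse t + (e*2*K) * (- (inverse (sqrt t) * (inverse (sqrt t) / 2) * inverse (sqrt t))))
     = (q - c*t - e * K * sqrt t) / t^2"
    using assms st by (simp add: field_simps power2_eq_square)
  moreover have "(\<lambda>t. s - q * inverse t - c * ln t + (e * 2*K) * inverse (sqrt t)) = (\<lambda>t. s - q / t - c * ln t + e * (2*K / sqrt t))"
    by (simp add: divide_inverse mult.assoc)
  ultimately show ?thesis by simp
qed


locale P1 =
  fixes c K :: real
  assumes K: "K \<ge> 0"
  assumes hypQ: "\<And>z. z \<ge> 1 \<Longrightarrow> \<bar>QQ z - c*z\<bar> \<le> K * sqrt z"
begin

definition Phi :: "real \<Rightarrow> real" where "Phi t = SS t - QQ t / t - c * ln t"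

lemma local_mono:
  assumes n: "n \<ge> 1" "real n \<le> x" "x \<le> y" "y \<le> real n + 1" and e: "e = 1 \<or> e = -1"
  shows "e * (Phi y + e * (2*K / sqrt y)) \<le> e * (Phi x + e * (2*K / sqrt x))"
proof -
  define f where "f t = SS (real n) - QQ (real n) / t - c * ln t + e * (2*K / sqrt t)" for t
  have x1: "x \<ge> 1" using n by linarith
  have Pf: "Phi t + e * (2*K / sqrt t) = f t" if "real n \<le> t" "t \<le> real n + 1" for t
    using SQ_shape[OF n(1) that] unfolding Phi_def f_def by simp
  have "e * f y \<le> e * f x"
  proof (cases "e = 1")
    case True
    have "f x \<ge> f y"
    proof (rule DERIV_nonpos_imp_decreasing_open[OF n(3)])
      fix t assume t: "x < t" "t < y"
      have t0: "t > 0" using t x1 by linarith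
      have "QQ (real n) = QQ t" using QQ_int[of n t] t n by simp
      hence "QQ (real n) - c * t \<le> K * sqrt t" using hypQ[of t] t x1 by simp
      hence "(QQ (real n) - c*t - e * K * sqrt t) / t^2 \<le> 0" using True by (intro divide_nonpos_nonneg) auto
      thus "\<exists>y. (f has_real_derivative y) (at t) \<and> y \<le> 0"
        using deriv_f[OF t0, of "SS (real n)" "QQ (real n)" c e K] unfolding f_def by blast
    next
      show "continuous_on {x..y} f" using x1 unfolding f_def by (intro continuous_intros) auto
    qed
    thus ?thesis using True by simp
  next
    case False
    hence em: "e = -1" using e by simp
    have "f x \<le> f y"
    proof (rule DERIV_nonneg_imp_increasing_open[OF n(3)])
      fix t assume t: "x < t" "t < y"
      have t0: "t > 0" using t x1 by linarith
      have "QQ (real n) = QQ t" using QQ_int[of n t] t n by simp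
      hence "QQ (real n) - c * t \<ge> - K * sqrt t" using hypQ[of t] t x1 by simp
      hence "(QQ (real n) - c*t - e * K * sqrt t) / t^2 \<ge> 0" using em by simp
      thus "\<exists>y. (f has_real_derivative y) (at t) \<and> y \<ge> 0"
        using deriv_f[OF t0, of "SS (real n)" "QQ (real n)" c e K] unfolding f_def by blast
    next
      show "continuous_on {x..y} f" using x1 unfolding f_def by (intro continuous_intros) auto
    qed
    thus ?thesis using em by simp
  qed
  thus ?thesis using Pf[of x] Pf[of y] n by simp
qed

lemma global_mono:
  assumes "1 \<le> x" "x \<le> y" and e: "e = 1 \<or> e = -1"
  shows "e * (Phi y + e * (2*K / sqrt y)) \<le> e * (Phi x + e * (2*K / sqrt x))"
proof -
  define G where "G t = e * (Phi t + e * (2*K / sqrt t))" for t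
  have "\<forall>x y. 1 \<le> x \<longrightarrow> x \<le> y \<longrightarrow> y \<le> real (nat \<lfloor>x\<rfloor>) + real (Suc k) \<longrightarrow> G y \<le> G x" for k
  proof (induction k)
    case 0
    show ?case
    proof (intro allI impI)
      fix x y :: real assume xy: "1 \<le> x" "x \<le> y" "y \<le> real (nat \<lfloor>x\<rfloor>) + real (Suc 0)"
      have "real (nat \<lfloor>x\<rfloor>) \<le> x" "nat \<lfloor>x\<rfloor> \<ge> 1" using xy(1) by linarith+
      thus "G y \<le> G x" unfolding G_def using local_mono[of "nat \<lfloor>x\<rfloor>" x y e] xy e by simp
    qed
  next
    case (Suc k)
    show ?case
    proof (intro allI impI)
      fix x y :: real assume xy: "1 \<le> x" "x \<le> y" "y \<le> real (nat \<lfloor>x\<rfloor>) + real (Suc (Suc k))"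
      define n where "n = nat \<lfloor>x\<rfloor>"
      have n: "real n \<le> x" "n \<ge> 1" "x < real n + 1" using xy(1) unfolding n_def by linarith+
      show "G y \<le> G x"
      proof (cases "y \<le> real n + 1")
        case True
        thus ?thesis unfolding G_def using local_mono[of n x y e] xy e n by simp
      next
        case False
        define x' where "x' = real (Suc n)"
        have fx': "nat \<lfloor>x'\<rfloor> = Suc n" unfolding x'_def by (simp only: floor_of_nat nat_int)
        have "G y \<le> G x'" using Suc.IH False xy(3) fx' unfolding x'_def n_def by (auto simp: x'_def)
        moreover have "G x' \<le> G x" unfolding G_def using local_mono[of n x x' e] xy e n by (simp add: x'_def)
        ultimately show ?thesis by simp
      qed
    qed
  qed
  moreover have "y \<le> real (nat \<lfloor>x\<rfloor>) + real (Suc (nat \<lceil>y\<rceil>))"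
    by (smt (verit) of_nat_0_le_iff real_nat_ceiling_ge of_nat_Suc)
  ultimately have "G y \<le> G x" using assms(1,2) by blast
  thus ?thesis unfolding G_def .
qed

lemma part1: "\<exists>B. \<forall>z\<ge>1. \<bar>SS z - c * ln z - B\<bar> \<le> 3 * K / sqrt z"
proof -
  define v where "v i = Phi (real (Suc i)) + 2*K / sqrt (real (Suc i))" for i
  define w where "w i = Phi (real (Suc i)) - 2*K / sqrt (real (Suc i))" for i
  have "decseq v" unfolding decseq_def v_def using global_mono[of _ _ 1] by simp
  moreover have "\<forall>i. w 0 \<le> v i"
  proof
    fix i
    have "w 0 \<le> w i" unfolding w_def using global_mono[of "real (Suc 0)" "real (Suc i)" "-1"] by simp
    also have "\<dots> \<le> v i" unfolding w_def v_def using K by simp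
    finally show "w 0 \<le> v i" .
  qed
  ultimately obtain L where L: "v \<longlonglongrightarrow> L" using decseq_convergent by blast
  have "(\<lambda>i. 4*K * sqrt (inverse (real (Suc i)))) \<longlonglongrightarrow> 4*K * sqrt 0"
    by (intro tendsto_intros LIMSEQ_inverse_real_of_nat)
  hence l4: "(\<lambda>i. 4*K / sqrt (real (Suc i))) \<longlonglongrightarrow> 0"
    by (simp add: real_sqrt_inverse divide_inverse)
  have wL: "w \<longlonglongrightarrow> L"
    using tendsto_diff[OF L l4] unfolding v_def w_def by simp
  show ?thesis
  proof (intro exI allI impI)
    fix z :: real assume z: "z \<ge> 1"
    have lo: "Phi z - 2*K / sqrt z \<le> L"
    proof (rule LIMSEQ_le_const[OF wL], intro exI allI impI)
      fix i assume "i \<ge> nat \<lceil>z\<rceil>"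
      hence "z \<le> real (Suc i)" by linarith
      thus "Phi z - 2*K / sqrt z \<le> w i" unfolding w_def using global_mono[of z "real (Suc i)" "-1"] z by simp
    qed
    have hi: "L \<le> Phi z + 2*K / sqrt z"
    proof (rule LIMSEQ_le_const2[OF L], intro exI allI impI)
      fix i assume "i \<ge> nat \<lceil>z\<rceil>"
      hence "z \<le> real (Suc i)" by linarith
      thus "v i \<le> Phi z + 2*K / sqrt z" unfolding v_def using global_mono[of z "real (Suc i)" 1] z by simp
    qed
    have z0: "z > 0" "sqrt z > 0" using z by auto
    have "QQ z / z - c = (QQ z - c * z) / z" using z0 by (simp add: diff_divide_distrib)
    hence "\<bar>QQ z / z - c\<bar> = \<bar>QQ z - c * z\<bar> / z" using z0 by simp
    also have "\<dots> \<le> K * sqrt z / z" using hypQ[OF z] z0 by (simp add: divide_right_mono)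
    also have "K * sqrt z / z = K / sqrt z"
      using z0(1) by (metis divide_divide_eq_right dual_order.strict_implies_order real_div_sqrt)
    finally have q: "\<bar>QQ z / z - c\<bar> \<le> K / sqrt z" .
    have "SS z - c * ln z - (L + c) = (Phi z - L) + (QQ z / z - c)" unfolding Phi_def by simp
    thus "\<bar>SS z - c * ln z - (L + c)\<bar> \<le> 3 * K / sqrt z" using lo hi q by (simp add: abs_le_iff) 
  qed
qed

end



definition zf :: "nat \<Rightarrow> real \<Rightarrow> real" where "zf n s = 1 / real (Suc n) powr s"
definition zf' :: "nat \<Rightarrow> real \<Rightarrow> real" where "zf' n s = - ln (real (Suc n)) / real (Suc n) powr s"

lemma summable_zf: "s > 1 \<Longrightarrow> summable (\<lambda>n. zf n s)"
proof -
  assume s: "s > 1"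
  have "summable (\<lambda>n. real n powr (-s))" using s summable_real_powr_iff by simp
  hence "summable (\<lambda>n. real (Suc n) powr (-s))" by (subst summable_Suc_iff)
  thus ?thesis unfolding zf_def by (simp add: powr_minus_divide)
qed

lemma zf_deriv: "(zf n has_field_derivative zf' n s) (at s within S)"
proof -
  define L where "L = ln (real (Suc n))"
  have e: "zf n = (\<lambda>s. exp (- (s * L)))"
    by (rule ext) (simp add: zf_def L_def powr_def exp_minus divide_inverse)
  have d1: "((\<lambda>x. x * L) has_field_derivative 1 * L) (at s within S)"
    by (rule DERIV_cmult_right[OF DERIV_ident])
  have "((\<lambda>s. exp (- (s * L))) has_field_derivative exp (- (s * L)) * (- (1 * L))) (at s within S)"
    by (rule DERIV_chain2[OF DERIV_exp DERIV_minus[OF d1]])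
  moreover have "exp (- (s * L)) * (- (1 * L)) = zf' n s"
    by (simp add: zf'_def L_def powr_def exp_minus divide_inverse)
  ultimately show ?thesis using e by simp
qed

lemma zeta_eq: "zeta = (\<lambda>s. \<Sum>n. zf n s)"
  by (rule ext) (simp add: zeta_def zf_def)

lemma summable_lnpow: "summable (\<lambda>n. ln (real (Suc n)) / real (Suc n) powr (3/2))"
proof (rule summable_comparison_test[where g = "\<lambda>n. 4 * real (Suc n) powr (-(5/4))"])
  have "summable (\<lambda>n. real n powr (-(5/4)))" using summable_real_powr_iff by simp
  hence "summable (\<lambda>n. real (Suc n) powr (-(5/4)))" by (subst summable_Suc_iff)
  thus "summable (\<lambda>n. 4 * real (Suc n) powr (-(5/4)))" by (rule summable_mult)
  show "\<exists>N. \<forall>n\<ge>N. norm (ln (real (Suc n)) / real (Suc n) powr (3/2)) \<le> 4 * real (Suc n) powr (-(5/4))"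
  proof (intro exI allI impI)
    fix n :: nat
    define x where "x = real (Suc n)"
    have x1: "x \<ge> 1" unfolding x_def by simp
    have l0: "ln x \<ge> 0" using x1 by simp
    have "ln x \<le> x powr (1/4) / (1/4)" using ln_powr_bound[OF x1, of "1/4"] by simp
    hence "ln x / x powr (3/2) \<le> (4 * x powr (1/4)) / x powr (3/2)"
      using x1 by (intro divide_right_mono) auto
    also have "\<dots> = 4 * (x powr (1/4) / x powr (3/2))" by simp
    also have "x powr (1/4) / x powr (3/2) = x powr (1/4 - 3/2)" by (rule powr_diff[symmetric])
    also have "(1/4 - 3/2::real) = -(5/4)" by simp
    finally show "norm (ln (real (Suc n)) / real (Suc n) powr (3/2)) \<le> 4 * real (Suc n) powr (-(5/4))"
      using l0 unfolding x_def by simp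
  qed
qed

lemma summable_lnsq: "summable (\<lambda>n. ln (real (Suc n)) / real (Suc n) ^ 2)"
proof (rule summable_comparison_test[OF _ summable_lnpow], intro exI allI impI)
  fix n :: nat
  have "real (Suc n) powr (3/2) \<le> real (Suc n) powr 2" by (intro powr_mono) auto
  hence "ln (real (Suc n)) / real (Suc n) powr 2 \<le> ln (real (Suc n)) / real (Suc n) powr (3/2)"
    by (intro divide_left_mono) auto
  thus "norm (ln (real (Suc n)) / real (Suc n) ^ 2) \<le> ln (real (Suc n)) / real (Suc n) powr (3/2)"
    by simp
qed

lemma deriv_zeta2: "deriv zeta 2 = - (\<Sum>n. ln (real (Suc n)) / real (Suc n) ^ 2)"
proof -
  define S :: "real set" where "S = {3/2<..<5/2}"
  have ul: "uniform_limit S (\<lambda>n x. \<Sum>i<n. zf' i x) (\<lambda>x. suminf (\<lambda>i. zf' i x)) sequentially"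
  proof (rule Weierstrass_m_test_ev[OF always_eventually summable_lnpow], intro allI ballI)
    fix n and x assume x: "x \<in> S"
    have "real (Suc n) powr (3/2) \<le> real (Suc n) powr x" using x unfolding S_def by (intro powr_mono) auto
    hence "ln (real (Suc n)) / real (Suc n) powr x \<le> ln (real (Suc n)) / real (Suc n) powr (3/2)"
      by (intro divide_left_mono) auto
    thus "norm (zf' n x) \<le> ln (real (Suc n)) / real (Suc n) powr (3/2)"
      unfolding zf'_def by simp
  qed
  have "((\<lambda>x. \<Sum>n. zf n x) has_field_derivative (\<Sum>n. zf' n 2)) (at 2)"
    by (rule has_field_derivative_series'(2)[of S _ _ 2])
       (use ul summable_zf[of 2] in \<open>auto simp: S_def zf_deriv uniformly_convergent_on_def\<close>)
  hence "deriv zeta 2 = (\<Sum>n. zf' n 2)" unfolding zeta_eq by (rule DERIV_imp_deriv)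
  also have "\<dots> = (\<Sum>n. - (ln (real (Suc n)) / real (Suc n) ^ 2))"
    by (simp add: zf'_def)
  also have "\<dots> = - (\<Sum>n. ln (real (Suc n)) / real (Suc n) ^ 2)"
    by (rule suminf_minus[OF summable_lnsq])
  finally show ?thesis .
qed




lemma SS_div: "SS (real m / real n) = (\<Sum>k\<in>{1..m div n}. aa k / real k)"
  unfolding SS_def by (simp only: floor_divide_of_nat_eq nat_int)

lemma harm_sq: "harm (M^2) = (\<Sum>i<M. SS (real (M^2) / real (Suc i ^ 2)) / real (Suc i) ^ 2)"
proof -
  have "harm (M^2) = (\<Sum>d\<in>{1..M^2}. (\<Sum>m\<in>{1..M^2 div d^2}. aa m / real m) / real d^2)"
    by (rule harm_decomp)
  also have "\<dots> = (\<Sum>d\<in>{1..M}. (\<Sum>m\<in>{1..M^2 div d^2}. aa m / real m) / real d^2)"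
  proof (rule sum.mono_neutral_right)
    show "{1..M} \<subseteq> {1..M^2}" by (auto simp: power2_eq_square)
    show "\<forall>d\<in>{1..M^2} - {1..M}. (\<Sum>m\<in>{1..M^2 div d^2}. aa m / real m) / real d^2 = 0"
    proof
      fix d assume "d \<in> {1..M^2} - {1..M}"
      hence "d > M" by auto
      hence "M^2 < d^2" by (simp add: power_strict_mono)
      hence "M^2 div d^2 = 0" by simp
      thus "(\<Sum>m\<in>{1..M^2 div d^2}. aa m / real m) / real d^2 = 0" by simp
    qed
  qed auto
  also have "\<dots> = (\<Sum>d\<in>{1..M}. SS (real (M^2) / real (d ^ 2)) / real d ^ 2)"
    by (simp only: SS_div)
  also have "\<dots> = (\<Sum>i<M. SS (real (M^2) / real (Suc i ^ 2)) / real (Suc i) ^ 2)"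
    by (rule sum_bounds_lt_plus1[symmetric])
  finally show ?thesis .
qed

lemma tail_bound:
  assumes "M \<ge> 1"
  shows "(\<Sum>k. 1 / real (Suc (k + M)) ^ 2) \<le> 1 / real M"
proof -
  have t: "(\<lambda>k. 1 / real (k + M) - 1 / real (Suc k + M)) sums (1 / real (0 + M) - 0)"
  proof (rule telescope_sums')
    have "(\<lambda>k. 1 / real (k + M)) = (\<lambda>k. inverse (real k + real M))" by (simp add: divide_inverse)
    moreover have "(\<lambda>k. inverse (real k + real M)) \<longlonglongrightarrow> 0"
    proof -
      have "filterlim (\<lambda>k. real M + real k) at_top sequentially"
        by (rule filterlim_tendsto_add_at_top[OF tendsto_const filterlim_real_sequentially])
      hence "filterlim (\<lambda>k. real k + real M) at_top sequentially" by (simp add: add.commute)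
      thus ?thesis by (rule tendsto_inverse_0_at_top)
    qed
    ultimately show "(\<lambda>k. 1 / real (k + M)) \<longlonglongrightarrow> 0" by (simp add: add.commute)
  qed
  have le: "1 / real (Suc (k + M)) ^ 2 \<le> 1 / real (k + M) - 1 / real (Suc k + M)" for k
  proof -
    define a where "a = real (k + M)"
    have a: "a \<ge> 1" using assms unfolding a_def by simp
    have "1 / (a + 1)^2 \<le> 1 / (a * (a + 1))"
      using a by (intro divide_left_mono) (auto simp: power2_eq_square)
    also have "\<dots> = 1 / a - 1 / (a + 1)" using a by (simp add: field_simps)
    finally show ?thesis unfolding a_def by (simp add: add.commute)
  qed
  have s1: "summable (\<lambda>k. 1 / real (Suc (k + M)) ^ 2)"
    by (rule summable_comparison_test[OF _ sums_summable[OF t]]) (use le in \<open>auto intro!: exI[of _ 0]\<close>)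
  have "(\<Sum>k. 1 / real (Suc (k + M)) ^ 2) \<le> (\<Sum>k. 1 / real (k + M) - 1 / real (Suc k + M))"
    by (rule suminf_le[OF le s1 sums_summable[OF t]])
  also have "\<dots> = 1 / real M" using t by (simp add: sums_iff)
  finally show ?thesis .
qed

lemma harm_le_ln: "M \<ge> 1 \<Longrightarrow> harm M \<le> 1 + ln (real M)"
proof -
  assume "M \<ge> 1"
  then obtain n where n: "M = Suc n" by (cases M) auto
  have "harm (Suc n) - ln (real (Suc n)) \<le> harm (Suc 0) - ln (real (Suc 0))"
    using decseq_harm_diff_ln unfolding decseq_def by blast
  thus ?thesis unfolding n by (simp add: harm_def)
qed

lemma ln_over_nat: "(\<lambda>M. ln (real M) / real M) \<longlonglongrightarrow> 0"
  by (rule filterlim_compose[OF ln_x_over_x_tendsto_0 filterlim_real_sequentially])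

lemma part2:
  fixes c B K :: real
  assumes K: "K \<ge> 0" and bnd: "\<And>z. z \<ge> 1 \<Longrightarrow> \<bar>SS z - c * ln z - B\<bar> \<le> K / sqrt z"
  shows "c * zeta 2 = 1 \<and> B = euler_mascheroni / zeta 2 - 2 * deriv zeta 2 / zeta 2 ^ 2"
proof -
  define sq where "sq i = 1 / real (Suc i) ^ 2" for i
  define lq where "lq i = ln (real (Suc i)) / real (Suc i) ^ 2" for i
  define Z where "Z = suminf sq"
  define P where "P = suminf lq"
  define T where "T M = (\<Sum>i<M. sq i)" for M
  define PP where "PP M = (\<Sum>i<M. lq i)" for M
  define x where "x M i = real (M^2) / real (Suc i ^ 2)" for M i
  define e where "e M i = SS (x M i) - c * ln (x M i) - B" for M i
  define E where "E M = (\<Sum>i<M. e M i / real (Suc i) ^ 2)" for M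
  have sumsq: "summable sq"
    using summable_zf[of 2] unfolding zf_def sq_def by simp
  have Zeq: "zeta 2 = Z" unfolding Z_def zeta_def sq_def by simp
  have Peq: "deriv zeta 2 = - P" unfolding P_def lq_def by (rule deriv_zeta2)
  have Zpos: "Z > 0" unfolding Z_def
    by (rule suminf_pos[OF sumsq]) (simp add: sq_def)
  have dec: "SS (x M i) / real (Suc i) ^ 2 = 2 * c * ln (real M) * sq i - 2 * c * lq i + B * sq i + e M i / real (Suc i) ^ 2"
    if "i < M" for M i
  proof -
    have M0: "real M > 0" using that by simp
    have l: "ln (x M i) = 2 * ln (real M) - 2 * ln (real (Suc i))"
      unfolding x_def using M0 by (simp add: ln_div ln_realpow)
    have "SS (x M i) = 2 * c * ln (real M) - 2 * c * ln (real (Suc i)) + B + e M i"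
      unfolding e_def l by (simp add: algebra_simps)
    thus ?thesis unfolding sq_def lq_def by (simp add: field_simps)
  qed
  have ident: "harm (M^2) = 2 * c * ln (real M) * T M - 2 * c * PP M + B * T M + E M" for M
  proof -
    have "harm (M^2) = (\<Sum>i<M. SS (x M i) / real (Suc i) ^ 2)" unfolding x_def by (rule harm_sq)
    also have "\<dots> = (\<Sum>i<M. 2 * c * ln (real M) * sq i - 2 * c * lq i + B * sq i + e M i / real (Suc i) ^ 2)"
      by (rule sum.cong[OF refl], rule dec) simp
    also have "\<dots> = 2 * c * ln (real M) * T M - 2 * c * PP M + B * T M + E M"
      unfolding T_def PP_def E_def by (simp add: sum.distrib sum_subtractf sum_distrib_left)
    finally show ?thesis .
  qed
  have Ebnd: "\<bar>E M\<bar> \<le> K * (1 + ln (real M)) / real M" if M1: "M \<ge> 1" for M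
  proof -
    have eb: "\<bar>e M i / real (Suc i) ^ 2\<bar> \<le> K / real M * inverse (real (Suc i))" if i: "i < M" for i
    proof -
      have M0: "real M > 0" using i by simp
      have x1: "x M i \<ge> 1" unfolding x_def using i by (simp add: power_mono)
      have sx: "sqrt (x M i) = real M / real (Suc i)"
        unfolding x_def by (simp add: real_sqrt_divide)
      have "\<bar>e M i\<bar> \<le> K / sqrt (x M i)" unfolding e_def by (rule bnd[OF x1])
      also have "\<dots> = K * real (Suc i) / real M" unfolding sx by simp
      finally have "\<bar>e M i\<bar> / real (Suc i) ^ 2 \<le> K * real (Suc i) / real M / real (Suc i) ^ 2"
        by (intro divide_right_mono) auto
      also have "\<dots> = K / real M * inverse (real (Suc i))"
      proof -
        have gen: "K * s / real M / s ^ 2 = K / real M * inverse s" if "s > 0" for s :: real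
          using that M0 by (simp add: field_simps power2_eq_square)
        show ?thesis by (rule gen) simp
      qed
      finally show ?thesis by (simp add: abs_div)
    qed
    have "\<bar>E M\<bar> \<le> (\<Sum>i<M. \<bar>e M i / real (Suc i) ^ 2\<bar>)" unfolding E_def by (rule sum_abs)
    also have "\<dots> \<le> (\<Sum>i<M. K / real M * inverse (real (Suc i)))" by (rule sum_mono) (use eb in auto)
    also have "\<dots> = K / real M * harm M" by (simp add: harm_altdef sum_distrib_left)
    also have "\<dots> \<le> K / real M * (1 + ln (real M))"
      using harm_le_ln[OF M1] K by (intro mult_left_mono) auto
    finally show ?thesis by simp
  qed
  have Etend: "E \<longlonglongrightarrow> 0"
  proof (rule Lim_null_comparison)
    show "\<forall>\<^sub>F M in sequentially. norm (E M) \<le> K * (1 + ln (real M)) / real M"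
      using eventually_ge_at_top[of "1::nat"] by eventually_elim (use Ebnd in auto)
    have l0: "(\<lambda>M. inverse (real M)) \<longlonglongrightarrow> 0"
      by (rule tendsto_inverse_0_at_top[OF filterlim_real_sequentially])
    have "(\<lambda>M. K * (inverse (real M) + ln (real M) / real M)) \<longlonglongrightarrow> K * (0 + 0)"
      by (intro tendsto_intros l0 ln_over_nat)
    moreover have "\<And>M. K * (1 + ln (real M)) / real M = K * (inverse (real M) + ln (real M) / real M)"
      by (simp add: divide_inverse algebra_simps)
    ultimately show "(\<lambda>M. K * (1 + ln (real M)) / real M) \<longlonglongrightarrow> 0" by simp
  qed
  have Tlim: "T \<longlonglongrightarrow> Z" unfolding T_def Z_def by (rule summable_LIMSEQ[OF sumsq])
  have Plim: "PP \<longlonglongrightarrow> P" unfolding PP_def P_def by (rule summable_LIMSEQ[OF summable_lnsq[folded lq_def]])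
  have Ttend: "(\<lambda>M. ln (real M) * (Z - T M)) \<longlonglongrightarrow> 0"
  proof (rule Lim_null_comparison)
    show "\<forall>\<^sub>F M in sequentially. norm (ln (real M) * (Z - T M)) \<le> ln (real M) / real M"
      using eventually_ge_at_top[of "1::nat"]
    proof eventually_elim
      case (elim M)
      have sp: "Z = (\<Sum>n. sq (n + M)) + T M" unfolding Z_def T_def
        by (rule suminf_split_initial_segment[OF sumsq])
      have f1: "(\<Sum>n. sq (n + M)) \<le> 1 / real M" unfolding sq_def using tail_bound[OF elim] by simp
      have f2: "(\<Sum>n. sq (n + M)) \<ge> 0"
        by (rule suminf_nonneg[OF summable_ignore_initial_segment[OF sumsq]]) (simp add: sq_def)
      have f3: "ln (real M) \<ge> 0" using elim by simp
      have "ln (real M) * (\<Sum>n. sq (n + M)) \<le> ln (real M) * (1 / real M)"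
        by (rule mult_left_mono[OF f1 f3])
      moreover have "0 \<le> ln (real M) * (\<Sum>n. sq (n + M))" using f2 f3 by simp
      moreover have "Z - T M = (\<Sum>n. sq (n + M))" using sp by simp
      ultimately show ?case by simp
    qed
    show "(\<lambda>M. ln (real M) / real M) \<longlonglongrightarrow> 0" by (rule ln_over_nat)
  qed
  have Hl: "(\<lambda>M. harm (M^2) - 2 * ln (real M)) \<longlonglongrightarrow> euler_mascheroni"
  proof -
    have sm: "strict_mono (\<lambda>M::nat. M^2)" by (auto simp: strict_mono_def power_strict_mono)
    have "((\<lambda>n. harm n - ln (real n)) \<circ> (\<lambda>M. M^2)) \<longlonglongrightarrow> euler_mascheroni"
      by (rule LIMSEQ_subseq_LIMSEQ[OF euler_mascheroni_LIMSEQ sm])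
    hence h: "(\<lambda>M. harm (M^2) - ln (real (M^2))) \<longlonglongrightarrow> euler_mascheroni" by (simp add: o_def)
    have "\<forall>\<^sub>F M in sequentially. harm (M^2) - ln (real (M^2)) = harm (M^2) - 2 * ln (real M)"
      using eventually_ge_at_top[of "1::nat"] by eventually_elim (simp add: ln_realpow)
    hence "((\<lambda>M. harm (M^2) - ln (real (M^2))) \<longlonglongrightarrow> euler_mascheroni) \<longleftrightarrow> ((\<lambda>M. harm (M^2) - 2 * ln (real M)) \<longlonglongrightarrow> euler_mascheroni)"
      by (rule tendsto_cong)
    with h show ?thesis by blast
  qed
  define u where "u M = harm (M^2) - 2 * ln (real M) - B * T M + 2 * c * PP M - E M + 2 * c * (ln (real M) * (Z - T M))" for M
  have ulim: "u \<longlonglongrightarrow> euler_mascheroni - B * Z + 2 * c * P - 0 + 2 * c * 0"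
    unfolding u_def
    by (rule tendsto_add[OF tendsto_diff[OF tendsto_add[OF tendsto_diff[OF Hl tendsto_mult[OF tendsto_const Tlim]] tendsto_mult[OF tendsto_const Plim]] Etend] tendsto_mult[OF tendsto_const Ttend]])
  have ueq: "u M = 2 * ln (real M) * (c * Z - 1)" for M
    unfolding u_def ident by (simp add: algebra_simps)
  have cZ: "c * Z = 1"
  proof (rule ccontr)
    assume ne: "c * Z \<noteq> 1"
    have "(\<lambda>M. u M / (2 * (c * Z - 1))) \<longlonglongrightarrow> (euler_mascheroni - B * Z + 2 * c * P - 0 + 2 * c * 0) / (2 * (c * Z - 1))"
      by (intro tendsto_intros ulim) (use ne in simp)
    moreover have "(\<lambda>M. u M / (2 * (c * Z - 1))) = (\<lambda>M. ln (real M))"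
    proof (rule ext)
      fix M
      have g: "a \<noteq> 0 \<Longrightarrow> 2 * l * a / (2 * a) = l" for a l :: real by simp
      show "u M / (2 * (c * Z - 1)) = ln (real M)" unfolding ueq by (rule g) (use ne in simp)
    qed
    ultimately have t: "(\<lambda>M. ln (real M)) \<longlonglongrightarrow> (euler_mascheroni - B * Z + 2 * c * P - 0 + 2 * c * 0) / (2 * (c * Z - 1))"
      by simp
    have "filterlim (\<lambda>M. ln (real M)) at_infinity sequentially"
      by (rule filterlim_at_top_imp_at_infinity[OF filterlim_compose[OF ln_at_top filterlim_real_sequentially]])
    thus False using not_tendsto_and_filterlim_at_infinity[OF trivial_limit_sequentially t] by blast
  qed
  have "u = (\<lambda>M. 0)" using cZ by (simp add: ueq fun_eq_iff)
  hence "(\<lambda>M. 0::real) \<longlonglongrightarrow> euler_mascheroni - B * Z + 2 * c * P - 0 + 2 * c * 0" using ulim by simp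
  hence lim0: "euler_mascheroni - B * Z + 2 * c * P = 0" using LIMSEQ_unique[OF _ tendsto_const] by fastforce
  have c: "c = 1 / Z" using cZ Zpos by (simp add: field_simps)
  have "B = euler_mascheroni / Z + 2 * P / Z ^ 2"
    using lim0 Zpos unfolding c by (simp add: field_simps power2_eq_square)
  thus ?thesis using cZ unfolding Zeq Peq by simp
qed



theorem mainTheorem9:
  assumes hyp: "\<forall>z::real. z \<ge> 1 \<longrightarrow>
     \<bar>(\<Sum>n\<in>{1..nat \<lfloor>z\<rfloor>}. real_of_int (moebius_mu n ^ 2)) - 6 / pi ^ 2 * z\<bar> \<le> 0.68 * sqrt z"
  shows "\<forall>z::real. z \<ge> 1 \<longrightarrow>
     \<bar>(\<Sum>n\<in>{1..nat \<lfloor>z\<rfloor>}. real_of_int (moebius_mu n ^ 2) / real n) - ln z / zeta 2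
        - (euler_mascheroni / zeta 2 - 2 * deriv zeta 2 / (zeta 2) ^ 2)\<bar> \<le> 2.04 / sqrt z"
proof -
  interpret P1 "6 / pi ^ 2" "0.68"
  proof
    fix z :: real assume "z \<ge> 1"
    thus "\<bar>QQ z - 6 / pi ^ 2 * z\<bar> \<le> 0.68 * sqrt z" using hyp unfolding QQ_def aa_def by blast
  qed simp
  obtain B where B: "\<And>z. z \<ge> 1 \<Longrightarrow> \<bar>SS z - 6 / pi ^ 2 * ln z - B\<bar> \<le> 3 * 0.68 / sqrt z"
    using part1 by blast
  have p2: "6 / pi ^ 2 * zeta 2 = 1 \<and> B = euler_mascheroni / zeta 2 - 2 * deriv zeta 2 / zeta 2 ^ 2"
    by (rule part2[of "3 * 0.68"]) (use B in auto)
  hence c: "6 / pi ^ 2 = 1 / zeta 2" by (metis mult.commute nonzero_eq_divide_eq one_neq_zero mult_zero_left)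
  show ?thesis
  proof (intro allI impI)
    fix z :: real assume z: "z \<ge> 1"
    have "\<bar>SS z - ln z / zeta 2 - B\<bar> \<le> 2.04 / sqrt z" using B[OF z] c by simp
    thus "\<bar>(\<Sum>n\<in>{1..nat \<lfloor>z\<rfloor>}. real_of_int (moebius_mu n ^ 2) / real n) - ln z / zeta 2
        - (euler_mascheroni / zeta 2 - 2 * deriv zeta 2 / (zeta 2) ^ 2)\<bar> \<le> 2.04 / sqrt z"
      using p2 unfolding SS_def aa_def by simp
  qed
qed

end
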